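(* Let $\pi,\sigma$ be formal Poisson deformations of $\pi_0,\sigma_0$, let $k\ge0$, $X_{(k)}\in\lambda\mathrm{Der}(\mathcal{B})[[\lambda]]$ and $\Phi_{(k)}=\exp(X_{(k)})$, and suppose that for all $a_1,a_2\in\mathcal{A}$, $\Phi_{(k)}^{-1}\sigma(\Phi_{(k)}\phi_0(a_1),\Phi_{(k)}\phi_0(a_2))=\phi_0(\pi(a_1,a_2))+\lambda^{k+1}R_{k+1}(a_1,a_2)+O(\lambda^{k+2})$ for a bilinear map $R_{k+1}:\mathcal{A}\times\mathcal{A}\to\mathcal{B}$. Then $R_{k+1}$ is a $2$-cocycle in $C^\bullet_{\mathrm{CE,der}}(\mathcal{A},\mathcal{B})$.
   Context: $\mathbb{K}$ is a field of characteristic zero. $\mathcal{A},\mathcal{B}$ are commutative $\mathbb{K}$-algebras with Poisson brackets $\pi_0=\{\cdot,\cdot\}_{\mathcal{A}}$, $\sigma_0=\{\cdot,\cdot\}_{\mathcal{B}}$, and $\phi_0:\mathcal{A}\to\mathcal{B}$ is a Poisson morphism (extended $\lambda$-linearly). A formal Poisson deformation of $\pi_0$ is a $\mathbb{K}[[\lambda]]$-bilinear Poisson bracket on $\mathcal{A}[[\lambda]]$ with zeroth-order term $\pi_0$. $\exp(X)=\sum_nX^n/n!$ for $X\in\lambda\mathrm{Der}(\mathcal{B})[[\lambda]]$. Chevalley–Eilenberg complex: $C^0_{\mathrm{CE}}(\mathcal{A},\mathcal{B})=\mathcal{B}$, $C^k_{\mathrm{CE}}$ = $k$-linear antisymmetric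 maps $\mathcal{A}^k\to\mathcal{B}$, $(\delta D)(a_0,\dots,a_k)=\sum_j(-1)^j\{\phi_0(a_j),D(\dots,\widehat{a_j},\dots)\}_{\mathcal{B}}+\sum_{i<j}(-1)^{i+j}D(\{a_i,a_j\}_{\mathcal{A}},\dots,\widehat{a_i},\dots,\widehat{a_j},\dots)$; $C^\bullet_{\mathrm{CE,der}}(\mathcal{A},\mathcal{B})$ is the subcomplex of cochains that are derivations along $\phi_0$ in each argument, i.e. $D(\dots,aa',\dots)=\phi_0(a)D(\dots,a',\dots)+D(\dots,a,\dots)\phi_0(a')$. *)

theory Defs
  imports Main "HOL-Computational_Algebra.Formal_Power_Series"
begin

definition kalgebra :: "('k::field \<Rightarrow> 'a::comm_ring_1 \<Rightarrow> 'a) \<Rightarrow> bool" where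
  "kalgebra sc \<longleftrightarrow> module sc \<and> (\<forall>c x y. sc c (x * y) = sc c x * y)"

definition bilinear_wrt ::
  "('s \<Rightarrow> 'x::ab_group_add \<Rightarrow> 'x) \<Rightarrow> ('s \<Rightarrow> 'y::ab_group_add \<Rightarrow> 'y) \<Rightarrow> ('x \<Rightarrow> 'x \<Rightarrow> 'y) \<Rightarrow> bool" where
  "bilinear_wrt scx scy B \<longleftrightarrow>
     (\<forall>x x' y. B (x + x') y = B x y + B x' y) \<and>
     (\<forall>x y y'. B x (y + y') = B x y + B x y') \<and>
     (\<forall>c x y. B (scx c x) y = scy c (B x y)) \<and>
     (\<forall>c x y. B x (scx c y) = scy c (B x y))"

definition poisson_bracket :: "('s \<Rightarrow> 'x::comm_ring \<Rightarrow> 'x) \<Rightarrow> ('x \<Rightarrow> 'x \<Rightarrow> 'x) \<Rightarrow> bool" where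
  "poisson_bracket sc P \<longleftrightarrow>
     bilinear_wrt sc sc P \<and>
     (\<forall>x y. P x y = - P y x) \<and>
     (\<forall>x y z. P x (P y z) + P y (P z x) + P z (P x y) = 0) \<and>
     (\<forall>x y z. P x (y * z) = P x y * z + y * P x z)"

definition fps_scale :: "('k \<Rightarrow> 'a \<Rightarrow> 'a::comm_monoid_add) \<Rightarrow> 'k fps \<Rightarrow> 'a fps \<Rightarrow> 'a fps" where
  "fps_scale sc c f = Abs_fps (\<lambda>n. \<Sum>i\<le>n. sc (fps_nth c i) (fps_nth f (n - i)))"

definition formal_poisson_deformation ::
  "('k::field \<Rightarrow> 'a::comm_ring_1 \<Rightarrow> 'a) \<Rightarrow> ('a \<Rightarrow> 'a \<Rightarrow> 'a) \<Rightarrow> ('a fps \<Rightarrow> 'a fps \<Rightarrow> 'a fps) \<Rightarrow> bool" where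
  "formal_poisson_deformation sc P0 P \<longleftrightarrow>
     poisson_bracket (fps_scale sc) P \<and>
     (\<forall>f g. fps_nth (P f g) 0 = P0 (fps_nth f 0) (fps_nth g 0))"

definition poisson_morphism ::
  "('k \<Rightarrow> 'a::comm_ring_1 \<Rightarrow> 'a) \<Rightarrow> ('k \<Rightarrow> 'b::comm_ring_1 \<Rightarrow> 'b) \<Rightarrow>
   ('a \<Rightarrow> 'a \<Rightarrow> 'a) \<Rightarrow> ('b \<Rightarrow> 'b \<Rightarrow> 'b) \<Rightarrow> ('a \<Rightarrow> 'b) \<Rightarrow> bool" where
  "poisson_morphism sa sb P Q \<phi> \<longleftrightarrow>
     (\<forall>x y. \<phi> (x + y) = \<phi> x + \<phi> y) \<and>
     (\<forall>c x. \<phi> (sa c x) = sb c (\<phi> x)) \<and>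
     (\<forall>x y. \<phi> (x * y) = \<phi> x * \<phi> y) \<and> \<phi> 1 = 1 \<and>
     (\<forall>x y. \<phi> (P x y) = Q (\<phi> x) (\<phi> y))"

definition fps_map_coeff :: "('a \<Rightarrow> 'b) \<Rightarrow> 'a fps \<Rightarrow> 'b fps" where
  "fps_map_coeff \<phi> f = Abs_fps (\<lambda>n. \<phi> (fps_nth f n))"

definition kderivation :: "('k \<Rightarrow> 'b::comm_ring_1 \<Rightarrow> 'b) \<Rightarrow> ('b \<Rightarrow> 'b) \<Rightarrow> bool" where
  "kderivation sb D \<longleftrightarrow>
     (\<forall>x y. D (x + y) = D x + D y) \<and> (\<forall>c x. D (sb c x) = sb c (D x)) \<and>
     (\<forall>x y. D (x * y) = D x * y + x * D y)"

text \<open>X = sum_n lambda^n X_n in lambda Der(B)[[lambda]]: X_0 = 0, all X_n derivations.\<close>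
definition lambda_der_series :: "('k \<Rightarrow> 'b::comm_ring_1 \<Rightarrow> 'b) \<Rightarrow> (nat \<Rightarrow> 'b \<Rightarrow> 'b) \<Rightarrow> bool" where
  "lambda_der_series sb X \<longleftrightarrow> X 0 = (\<lambda>x. 0) \<and> (\<forall>n. kderivation sb (X n))"

definition series_op :: "(nat \<Rightarrow> 'b \<Rightarrow> 'b::comm_monoid_add) \<Rightarrow> 'b fps \<Rightarrow> 'b fps" where
  "series_op X f = Abs_fps (\<lambda>n. \<Sum>i\<le>n. X i (fps_nth f (n - i)))"

text \<open>exp(X) = sum_m X^m / m!, computed coefficientwise: since X has no zeroth-order
term, X^m f is O(lambda^m), so only m \<le> n contributes to the coefficient of lambda^n.\<close>
definition fps_exp_op ::
  "('k::field_char_0 \<Rightarrow> 'b::comm_ring_1 \<Rightarrow> 'b) \<Rightarrow> (nat \<Rightarrow> 'b \<Rightarrow> 'b) \<Rightarrow> 'b fps \<Rightarrow> 'b fps" where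
  "fps_exp_op sb X f = Abs_fps (\<lambda>n. \<Sum>m\<le>n. sb (inverse (fact m)) (fps_nth ((series_op X ^^ m) f) n))"

definition CE_der_2cochain ::
  "('k \<Rightarrow> 'a::comm_ring_1 \<Rightarrow> 'a) \<Rightarrow> ('k \<Rightarrow> 'b::comm_ring_1 \<Rightarrow> 'b) \<Rightarrow> ('a \<Rightarrow> 'b) \<Rightarrow> ('a \<Rightarrow> 'a \<Rightarrow> 'b) \<Rightarrow> bool" where
  "CE_der_2cochain sa sb \<phi> D \<longleftrightarrow>
     bilinear_wrt sa sb D \<and>
     (\<forall>x y. D x y = - D y x) \<and>
     (\<forall>a a' y. D (a * a') y = \<phi> a * D a' y + D a y * \<phi> a') \<and>
     (\<forall>x a a'. D x (a * a') = \<phi> a * D x a' + D x a * \<phi> a')"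

definition CE_delta2 ::
  "('a \<Rightarrow> 'a \<Rightarrow> 'a) \<Rightarrow> ('b::ab_group_add \<Rightarrow> 'b \<Rightarrow> 'b) \<Rightarrow> ('a \<Rightarrow> 'b) \<Rightarrow> ('a \<Rightarrow> 'a \<Rightarrow> 'b) \<Rightarrow> 'a \<Rightarrow> 'a \<Rightarrow> 'a \<Rightarrow> 'b" where
  "CE_delta2 P Q \<phi> D a0 a1 a2 =
      Q (\<phi> a0) (D a1 a2) - Q (\<phi> a1) (D a0 a2) + Q (\<phi> a2) (D a0 a1)
    - D (P a0 a1) a2 + D (P a0 a2) a1 - D (P a1 a2) a0"

end

theory Submission
  imports Defs
begin
unbundle fps_syntax

locale DS =
  fixes sb :: "'k::field_char_0 \<Rightarrow> 'b::comm_ring_1 \<Rightarrow> 'b" and X :: "nat \<Rightarrow> 'b \<Rightarrow> 'b"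
  assumes alg: "kalgebra sb" and Xd: "lambda_der_series sb X"
begin

lemma modb: "module sb" using alg by (simp add: kalgebra_def)
lemma sb_mult: "sb c (x*y) = sb c x * y" using alg by (simp add: kalgebra_def)
lemma sb_mult2: "sb c (x*y) = x * sb c y" by (metis mult.commute sb_mult)
lemma sb_add: "sb c (x+y) = sb c x + sb c y" using modb module.scale_right_distrib by metis
lemma sb_ladd: "sb (c+d) x = sb c x + sb d x" using modb module.scale_left_distrib by metis
lemma sb_zero[simp]: "sb c 0 = 0" using modb module.scale_zero_right by metis
lemma sb_zero_left[simp]: "sb 0 x = 0" using modb module.scale_zero_left by metis
lemma sb_one[simp]: "sb 1 x = x" using modb module.scale_one by metis
lemma sb_scale[simp]: "sb a (sb b x) = sb (a*b) x" using modb module.scale_scale by metis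
lemma sb_sum: "sb c (sum f S) = (\<Sum>x\<in>S. sb c (f x))" using modb module.scale_sum_right by metis
lemma sb_of_nat: "sb (of_nat n) x = of_nat n * x"
  by (induct n) (simp_all add: sb_ladd algebra_simps)

lemma X0: "X 0 = (\<lambda>x. 0)" using Xd by (simp add: lambda_der_series_def)
lemma Xadd: "X i (x+y) = X i x + X i y" using Xd by (simp add: lambda_der_series_def kderivation_def)
lemma Xsc: "X i (sb c x) = sb c (X i x)" using Xd by (simp add: lambda_der_series_def kderivation_def)
lemma Xmult: "X i (x*y) = X i x * y + x * X i y" using Xd by (simp add: lambda_der_series_def kderivation_def)
lemma Xzero[simp]: "X i 0 = 0"
proof -
  have "X i (0+0) = X i 0 + X i 0" by (rule Xadd)
  then show ?thesis by simp
qed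
lemma Xsum: "X i (sum f S) = (\<Sum>j\<in>S. X i (f j))"
  by (induct S rule: infinite_finite_induct) (simp_all add: Xadd)
lemma Xone[simp]: "X i 1 = 0"
proof -
  have "X i (1*1) = X i 1 * 1 + 1 * X i 1" by (rule Xmult)
  then show ?thesis by simp
qed

definition D where "D = series_op X"
definition scf :: "'k \<Rightarrow> 'b fps \<Rightarrow> 'b fps" where "scf c f = Abs_fps (\<lambda>i. sb c (f $ i))"
definition E where "E m f = scf (inverse (fact m)) ((D ^^ m) f)"
definition T where "T N f = (\<Sum>i\<le>N. fps_X^i * fps_map_coeff (X i) f)"

lemma scf_nth[simp]: "scf c f $ n = sb c (f $ n)" by (simp add: scf_def)
lemma D_nth: "D f $ n = (\<Sum>i\<le>n. X i (f $ (n-i)))" by (simp add: D_def series_op_def)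

lemma D_add: "D (f+g) = D f + D g"
  by (rule fps_ext) (simp add: D_nth Xadd sum.distrib)
lemma D_zero[simp]: "D 0 = 0"
  by (rule fps_ext) (simp add: D_nth)
lemma D_scf: "D (scf c f) = scf c (D f)"
  by (rule fps_ext) (simp add: D_nth Xsc sb_sum)
lemma scf_add: "scf c (f+g) = scf c f + scf c g"
  by (rule fps_ext) (simp add: sb_add)
lemma scf_zero[simp]: "scf c 0 = 0" by (rule fps_ext) simp
lemma scf_scf[simp]: "scf a (scf b f) = scf (a*b) f" by (rule fps_ext) simp
lemma scf_one[simp]: "scf 1 f = f" by (rule fps_ext) simp
lemma scf_of_nat: "scf (of_nat n) f = of_nat n * f"
  by (rule fps_ext) (simp add: sb_of_nat fps_of_nat)
lemma scf_mult: "scf c (f*g) = scf c f * g"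
  by (rule fps_ext) (simp add: fps_mult_nth sb_sum sb_mult)
lemma scf_mult2: "scf c (f*g) = f * scf c g"
  by (rule fps_ext) (simp add: fps_mult_nth sb_sum sb_mult2)
lemma scf_sum: "scf c (sum f S) = (\<Sum>x\<in>S. scf c (f x))"
  by (rule fps_ext) (simp add: fps_sum_nth sb_sum)

lemma map_nth[simp]: "fps_map_coeff g f $ n = g (f $ n)" by (simp add: fps_map_coeff_def)

lemma T_nth: "n \<le> N \<Longrightarrow> T N f $ n = D f $ n"
proof -
  assume n: "n \<le> N"
  have "T N f $ n = (\<Sum>i\<le>N. if n < i then 0 else X i (f $ (n-i)))"
    unfolding T_def fps_sum_nth fps_X_power_mult_nth by (rule sum.cong) (simp_all only: map_nth)
  also have "\<dots> = (\<Sum>i\<le>n. X i (f $ (n-i)))"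
    using n by (intro sum.mono_neutral_cong_right) auto
  finally show ?thesis by (simp add: D_nth)
qed

lemma mult_local: "(\<forall>i\<le>n. a $ i = a' $ i) \<Longrightarrow> (a*g) $ n = (a'*g) $ n"
  by (simp add: fps_mult_nth)
lemma mult_local2: "(\<forall>i\<le>n. a $ i = a' $ i) \<Longrightarrow> (g*a) $ n = (g*a') $ n"
  by (simp add: fps_mult_nth)

lemma map_mult: "fps_map_coeff (X i) (f*g) = fps_map_coeff (X i) f * g + f * fps_map_coeff (X i) g"
  by (rule fps_ext) (simp add: fps_map_coeff_def fps_mult_nth Xsum Xmult sum.distrib)

lemma T_mult: "T N (f*g) = T N f * g + f * T N g"
  by (simp add: T_def map_mult algebra_simps sum.distrib sum_distrib_left sum_distrib_right)

lemma D_mult: "D (f*g) = D f * g + f * D g"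
proof (rule fps_ext)
  fix n
  have "D (f*g) $ n = T n (f*g) $ n" by (simp add: T_nth)
  also have "\<dots> = (T n f * g) $ n + (f * T n g) $ n" by (simp add: T_mult)
  also have "(T n f * g) $ n = (D f * g) $ n" by (rule mult_local) (simp add: T_nth)
  also have "(f * T n g) $ n = (f * D g) $ n" by (rule mult_local2) (simp add: T_nth)
  finally show "D (f*g) $ n = (D f * g + f * D g) $ n" by simp
qed

lemma ord_D: "\<forall>i<s. f $ i = 0 \<Longrightarrow> \<forall>i<Suc s. D f $ i = 0"
proof (intro allI impI)
  fix i assume h: "\<forall>i<s. f $ i = 0" and i: "i < Suc s"
  have "\<forall>j\<le>i. X j (f $ (i-j)) = 0"
  proof (intro allI impI)
    fix j assume "j \<le> i"
    show "X j (f $ (i-j)) = 0"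
    proof (cases "j = 0")
      case True then show ?thesis by (simp add: X0)
    next
      case False then have "i - j < s" using i \<open>j \<le> i\<close> by arith
      then show ?thesis using h by simp
    qed
  qed
  then show "D f $ i = 0" by (simp add: D_nth)
qed

lemma ord_Dpow: "\<forall>i<s. f $ i = 0 \<Longrightarrow> \<forall>i<s+m. (D^^m) f $ i = 0"
proof (induct m)
  case 0 then show ?case by simp
next
  case (Suc m)
  then have "\<forall>i<Suc (s+m). D ((D^^m) f) $ i = 0" by (intro ord_D) simp
  then show ?case by simp
qed

lemma ord_E: "\<forall>i<s. f $ i = 0 \<Longrightarrow> \<forall>i<s+m. E m f $ i = 0"
  using ord_Dpow[of s f m] by (simp add: E_def)

lemma ord_mult: fixes a b :: "'b fps" shows "\<forall>i<s. a $ i = 0 \<Longrightarrow> \<forall>i<t. b $ i = 0 \<Longrightarrow> \<forall>i<s+t. (a*b) $ i = 0"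
proof (intro allI impI)
  fix i assume a: "\<forall>i<s. a $ i = 0" and b: "\<forall>i<t. b $ i = 0" and i: "i < s+t"
  have "\<forall>j\<in>{0..i}. a $ j * b $ (i-j) = 0"
  proof
    fix j assume "j \<in> {0..i}"
    show "a $ j * b $ (i-j) = 0"
    proof (cases "j < s")
      case True then show ?thesis using a by simp
    next
      case False then have "i - j < t" using i \<open>j \<in> {0..i}\<close> by auto
      then show ?thesis using b by simp
    qed
  qed
  then show "(a*b) $ i = 0" by (simp add: fps_mult_nth)
qed


lemma E0[simp]: "E 0 f = f" by (simp add: E_def)

lemma Dpow_add: "(D^^m) (f+g) = (D^^m) f + (D^^m) g"
  by (induct m) (simp_all add: D_add)
lemma Dpow_zero[simp]: "(D^^m) 0 = 0"
  by (induct m) simp_all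
lemma E_add: "E m (f+g) = E m f + E m g"
  by (simp add: E_def Dpow_add scf_add)
lemma E_zero[simp]: "E m 0 = 0" by (simp add: E_def)
lemma D_sum: "D (sum f S) = (\<Sum>x\<in>S. D (f x))"
  by (induct S rule: infinite_finite_induct) (simp_all add: D_add)

lemma fact_id: "of_nat (Suc j) * inverse (fact (Suc j) :: 'k::field_char_0) = inverse (fact j)"
proof -
  have nz: "(of_nat (Suc j) :: 'k::field_char_0) \<noteq> 0" by (rule of_nat_neq_0)
  have "(fact (Suc j) :: 'k) = of_nat (Suc j) * fact j" by (rule fact_Suc)
  then have "of_nat (Suc j) * inverse (fact (Suc j) :: 'k) = (of_nat (Suc j) * inverse (of_nat (Suc j))) * inverse (fact j)"
    by (simp only: inverse_mult_distrib mult.assoc)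
  also have "\<dots> = inverse (fact j)" using nz by simp
  finally show ?thesis .
qed

lemma D_E: "D (E j f) = of_nat (Suc j) * E (Suc j) f"
proof -
  have "D (E j f) = scf (inverse (fact j)) ((D^^Suc j) f)" by (simp add: E_def D_scf)
  also have "\<dots> = scf (of_nat (Suc j) * inverse (fact (Suc j))) ((D^^Suc j) f)"
    by (simp only: fact_id)
  also have "\<dots> = of_nat (Suc j) * E (Suc j) f"
    by (simp only: E_def scf_of_nat[symmetric] scf_scf)
  finally show ?thesis .
qed

lemma E_Suc: "E (Suc m) h = scf (inverse (of_nat (Suc m))) (D (E m h))"
proof -
  have "scf (inverse (of_nat (Suc m))) (D (E m h)) = scf (inverse (of_nat (Suc m))) (scf (of_nat (Suc m)) (E (Suc m) h))"
    by (simp only: D_E scf_of_nat)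
  also have "\<dots> = E (Suc m) h"
    by (simp del: of_nat_Suc)
  finally show ?thesis by simp
qed

lemma E_leib: "E m (f*g) = (\<Sum>j\<le>m. E j f * E (m-j) g)"
proof (induct m)
  case 0 then show ?case by simp
next
  case (Suc m)
  define A where "A j = E j f * E (Suc m - j) g" for j
  have "D (E m (f*g)) = (\<Sum>j\<le>m. D (E j f) * E (m-j) g + E j f * D (E (m-j) g))"
    by (simp add: Suc D_sum D_mult)
  also have "\<dots> = (\<Sum>j\<le>m. of_nat (Suc j) * A (Suc j)) + (\<Sum>j\<le>m. of_nat (Suc m - j) * A j)"
    by (simp add: sum.distrib D_E A_def Suc_diff_le algebra_simps del: of_nat_Suc)
  also have "(\<Sum>j\<le>m. of_nat (Suc j) * A (Suc j)) = (\<Sum>j\<le>Suc m. of_nat j * A j)"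
    by (subst sum.atMost_Suc_shift) simp
  also have "(\<Sum>j\<le>m. of_nat (Suc m - j) * A j) = (\<Sum>j\<le>Suc m. of_nat (Suc m - j) * A j)"
    by simp
  also have "(\<Sum>j\<le>Suc m. of_nat j * A j) + (\<Sum>j\<le>Suc m. of_nat (Suc m - j) * A j)
      = (\<Sum>j\<le>Suc m. of_nat (Suc m) * A j)"
    by (subst sum.distrib[symmetric], rule sum.cong) (auto simp: algebra_simps of_nat_diff simp del: of_nat_Suc)
  also have "\<dots> = scf (of_nat (Suc m)) (\<Sum>j\<le>Suc m. A j)"
    by (simp only: scf_of_nat sum_distrib_left)
  finally have "D (E m (f*g)) = scf (of_nat (Suc m)) (\<Sum>j\<le>Suc m. A j)" .
  then have "E (Suc m) (f*g) = (\<Sum>j\<le>Suc m. A j)"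
    by (simp add: E_Suc del: of_nat_Suc)
  then show ?case by (simp add: A_def)
qed

definition PHI where "PHI = fps_exp_op sb X"

lemma PHI_nth: "PHI f $ n = (\<Sum>m\<le>n. E m f $ n)"
  by (simp add: PHI_def fps_exp_op_def E_def D_def)

lemma E_low: "n < m \<Longrightarrow> E m f $ n = 0"
  using ord_E[of 0 f m] by simp

lemma PHI_nth_N: "n \<le> N \<Longrightarrow> PHI f $ n = (\<Sum>m\<le>N. E m f) $ n"
  unfolding PHI_nth fps_sum_nth
  by (rule sum.mono_neutral_cong_left) (auto simp: E_low)

lemma PHI_add: "PHI (f+g) = PHI f + PHI g"
  by (rule fps_ext) (simp add: PHI_nth E_add sum.distrib)
lemma PHI_zero[simp]: "PHI 0 = 0"
  by (rule fps_ext) (simp add: PHI_nth)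
lemma PHI_diff: "PHI (f-g) = PHI f - PHI g"
  using PHI_add[of "f-g" g] by (simp add: algebra_simps)

lemma PHI_mult: "PHI (f*g) = PHI f * PHI g"
proof (rule fps_ext)
  fix n
  define h where "h p q = (E p f * E q g) $ n" for p q
  have h0: "h p q = 0" if "n < p + q" for p q
    using ord_mult[of p "E p f" q "E q g"] ord_E[of 0 f p] ord_E[of 0 g q] that
    by (simp add: h_def)
  have h0': "p + q \<le> n" if "h p q \<noteq> 0" for p q
    using h0[of p q] that by linarith
  have "PHI (f*g) $ n = (\<Sum>m\<le>n. \<Sum>j\<le>m. h j (m-j))"
    by (simp add: PHI_nth E_leib fps_sum_nth h_def)
  also have "\<dots> = (\<Sum>(p,q)\<in>{(p,q). p+q \<le> n}. h p q)"
    by (rule sum.triangle_reindex_eq[symmetric])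
  also have "\<dots> = (\<Sum>(p,q)\<in>{..n}\<times>{..n}. h p q)"
    by (rule sum.mono_neutral_cong_left) (auto simp: h0')
  also have "\<dots> = (\<Sum>p\<le>n. \<Sum>q\<le>n. h p q)"
    by (simp add: sum.cartesian_product)
  also have "\<dots> = ((\<Sum>p\<le>n. E p f) * (\<Sum>q\<le>n. E q g)) $ n"
    by (simp add: h_def sum_product fps_sum_nth)
  also have "\<dots> = (PHI f * (\<Sum>q\<le>n. E q g)) $ n"
    by (rule mult_local) (simp add: PHI_nth_N)
  also have "\<dots> = (PHI f * PHI g) $ n"
    by (rule mult_local2) (simp add: PHI_nth_N)
  finally show "PHI (f*g) $ n = (PHI f * PHI g) $ n" .
qed

lemma PHI_fix: "D g = 0 \<Longrightarrow> PHI g = g"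
proof (rule fps_ext)
  fix n assume Dg: "D g = 0"
  have z: "(D^^Suc m) g = 0" for m
    by (induct m) (simp_all add: Dg)
  have "E m g $ n = (if m = 0 then g $ n else 0)" for m
    by (cases m) (simp_all add: E_def z del: funpow.simps)
  then show "PHI g $ n = g $ n" by (simp add: PHI_nth)
qed

lemma D_one: "D 1 = 0"
  by (rule fps_ext) (auto simp: D_nth intro!: sum.neutral)
lemma Xif[simp]: "X i (if P then 1 else 0) = 0" by simp
lemma D_X: "D fps_X = 0"
  by (rule fps_ext) (auto simp: D_nth intro!: sum.neutral)

lemma PHI_Xpow: "PHI (fps_X^n) = fps_X^n"
  by (induct n) (simp_all add: PHI_fix D_one D_X PHI_mult)
lemma PHI_shift: "PHI (fps_X^n * f) = fps_X^n * PHI f"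
  by (simp add: PHI_mult PHI_Xpow)

lemma PHI_lead:
  assumes "\<forall>i<s. h $ i = 0"
  shows "\<forall>i<s. PHI h $ i = 0" "PHI h $ s = h $ s"
proof -
  show "\<forall>i<s. PHI h $ i = 0"
  proof (intro allI impI)
    fix i assume "i < s"
    then have "\<forall>m. E m h $ i = 0" using ord_E[OF assms] by simp
    then show "PHI h $ i = 0" by (simp add: PHI_nth)
  qed
  have "E m h $ s = (if m = 0 then h $ s else 0)" for m
    using ord_E[OF assms, of m] by (cases m) simp_all
  then show "PHI h $ s = h $ s" by (simp add: PHI_nth)
qed

lemma PHI_0: "PHI f $ 0 = f $ 0" by (simp add: PHI_nth)

lemma PHI_local: "\<forall>i<N. f $ i = f' $ i \<Longrightarrow> \<forall>i<N. PHI f $ i = PHI f' $ i"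
proof -
  assume "\<forall>i<N. f $ i = f' $ i"
  then have "\<forall>i<N. (f - f') $ i = 0" by simp
  from PHI_lead(1)[OF this] show ?thesis by (simp add: PHI_diff)
qed

lemma PHI_inj: "inj PHI"
proof (rule injI)
  fix f g assume eq: "PHI f = PHI g"
  show "f = g"
  proof (rule ccontr)
    assume "f \<noteq> g"
    then have hn: "f - g \<noteq> 0" by simp
    define s where "s = subdegree (f - g)"
    have "\<forall>i<s. (f-g) $ i = 0" by (auto simp: s_def)
    from PHI_lead(2)[OF this] have "PHI (f-g) $ s = (f-g) $ s" .
    moreover have "PHI (f-g) = 0" by (simp add: PHI_diff eq)
    moreover have "(f-g) $ s \<noteq> 0" using nth_subdegree_nonzero[OF hn] unfolding s_def .
    ultimately show False by simp
  qed
qed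

lemma mono_nth: "(fps_const e * fps_X^n) $ i = (if i = n then e else (0::'b))"
  by simp

lemma PHI_surj: "surj PHI"
proof -
  have "\<exists>f. PHI f = g" for g
  proof -
    define G where "G = rec_nat (0::'b fps) (\<lambda>n Gn. Gn + fps_const (g $ n - PHI Gn $ n) * fps_X ^ n)"
    have G0: "G 0 = 0" by (simp add: G_def)
    have GS: "G (Suc n) = G n + fps_const (g $ n - PHI (G n) $ n) * fps_X ^ n" for n
      by (simp add: G_def)
    have a: "\<forall>i<n. G (n+d) $ i = G n $ i" for n d
      by (induct d) (simp_all add: GS)
    have b: "\<forall>i<n. PHI (G n) $ i = g $ i" for n
    proof (induct n)
      case 0 then show ?case by simp
    next
      case (Suc n)
      define M where "M = fps_const (g $ n - PHI (G n) $ n) * fps_X ^ n"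
      have M0: "\<forall>i<n. M $ i = 0" by (simp add: M_def)
      have "PHI (G (Suc n)) = PHI (G n) + PHI M" by (simp add: GS PHI_add M_def)
      then show ?case using Suc PHI_lead[OF M0] by (auto simp: M_def less_Suc_eq)
    qed
    define f where "f = Abs_fps (\<lambda>n. G (Suc n) $ n)"
    have "PHI f $ n = g $ n" for n
    proof -
      have "\<forall>i<Suc n. f $ i = G (Suc n) $ i"
      proof (intro allI impI)
        fix i assume "i < Suc n"
        then have "Suc n = Suc i + (n - i)" by simp
        then have "G (Suc n) $ i = G (Suc i) $ i" using a[of "Suc i" "n-i"] by simp
        then show "f $ i = G (Suc n) $ i" by (simp add: f_def)
      qed
      from PHI_local[OF this] have "PHI f $ n = PHI (G (Suc n)) $ n" by simp
      also have "\<dots> = g $ n" using b[of "Suc n"] by simp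
      finally show ?thesis .
    qed
    then show ?thesis by (intro exI[of _ f] fps_ext) simp
  qed
  then show ?thesis by (metis surj_def)
qed

lemma PHI_bij: "bij PHI" using PHI_inj PHI_surj by (simp add: bij_def)


lemma PSI_PHI[simp]: "inv PHI (PHI f) = f" using PHI_inj by (simp add: inv_f_f)
lemma PHI_PSI[simp]: "PHI (inv PHI g) = g" using PHI_surj by (simp add: surj_f_inv_f)
lemma PSI_add: "inv PHI (f+g) = inv PHI f + inv PHI g"
proof -
  have "inv PHI (f+g) = inv PHI (PHI (inv PHI f + inv PHI g))" by (simp only: PHI_add PHI_PSI)
  then show ?thesis by (simp only: PSI_PHI)
qed
lemma PSI_mult: "inv PHI (f*g) = inv PHI f * inv PHI g"
proof -
  have "inv PHI (f*g) = inv PHI (PHI (inv PHI f * inv PHI g))" by (simp only: PHI_mult PHI_PSI)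
  then show ?thesis by (simp only: PSI_PHI)
qed
lemma PSI_shift: "inv PHI (fps_X^n * f) = fps_X^n * inv PHI f"
proof -
  have "inv PHI (fps_X^n * f) = inv PHI (PHI (fps_X^n * inv PHI f))" by (simp only: PHI_shift PHI_PSI)
  then show ?thesis by (simp only: PSI_PHI)
qed
lemma PSI_0: "inv PHI f $ 0 = f $ 0"
  using PHI_0[of "inv PHI f"] by simp
lemma PSI_zero[simp]: "inv PHI 0 = 0"
  using PSI_PHI[of 0] by simp
lemma PSI_minus: "inv PHI (-f) = - inv PHI f"
proof -
  have "inv PHI f + inv PHI (-f) = 0" using PSI_add[of f "-f"] by simp
  then show ?thesis by (simp add: add_eq_0_iff)
qed

end

lemma fps_scale_Xpow:
  assumes "module sc"
  shows "fps_scale sc (fps_X^n) g = fps_X^n * g"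
proof (rule fps_ext)
  fix m
  have "\<And>i. sc ((fps_X^n) $ i) (g $ (m-i)) = (if i = n then g $ (m-i) else 0)"
    using assms by (simp add: module.scale_zero_left module.scale_one)
  then show "fps_scale sc (fps_X^n) g $ m = (fps_X^n * g) $ m"
    by (simp add: fps_scale_def fps_X_power_mult_nth)
qed

lemma fps_decomp: "g = (\<Sum>n\<le>j. fps_X^n * fps_const (g $ n)) + fps_X^(Suc j) * fps_shift (Suc j) g"
proof (rule fps_ext)
  fix i
  have "(\<Sum>n\<le>j. fps_X^n * fps_const (g $ n)) $ i = (\<Sum>n\<le>j. if i = n then g $ n else 0)"
    unfolding fps_sum_nth by (rule sum.cong) (auto simp: fps_X_power_mult_nth)
  then show "g $ i = ((\<Sum>n\<le>j. fps_X^n * fps_const (g $ n)) + fps_X^(Suc j) * fps_shift (Suc j) g) $ i"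
    by (simp add: fps_X_power_mult_nth del: power_Suc)
qed

lemma expansion:
  fixes P :: "'c::comm_ring_1 fps \<Rightarrow> 'c fps"
  assumes add: "\<And>g g'. P (g+g') = P g + P g'" and sh: "\<And>n g. P (fps_X^n * g) = fps_X^n * P g"
  shows "P g $ j = (\<Sum>n\<le>j. P (fps_const (g $ n)) $ (j-n))"
proof -
  have z: "P 0 = 0" using add[of 0 0] by simp
  have sm: "P (sum f S) = (\<Sum>x\<in>S. P (f x))" for f :: "nat \<Rightarrow> 'c fps" and S
    by (induct S rule: infinite_finite_induct) (simp_all add: z add)
  have "P g = (\<Sum>n\<le>j. fps_X^n * P (fps_const (g $ n))) + fps_X^(Suc j) * P (fps_shift (Suc j) g)"
    by (subst fps_decomp[of g j]) (simp add: add sm sh del: power_Suc)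
  then have "P g $ j = (\<Sum>n\<le>j. (fps_X^n * P (fps_const (g $ n))) $ j)"
    by (simp add: fps_sum_nth fps_X_power_mult_nth del: power_Suc)
  also have "\<dots> = (\<Sum>n\<le>j. P (fps_const (g $ n)) $ (j-n))"
    by (rule sum.cong) (auto simp: fps_X_power_mult_nth)
  finally show ?thesis .
qed

lemma br_facts:
  fixes P :: "'c::comm_ring \<Rightarrow> 'c \<Rightarrow> 'c"
  assumes "poisson_bracket sc P"
  shows br_add2: "P u (v+v') = P u v + P u v'"
    and br_add1: "P (u+u') v = P u v + P u' v"
    and br_anti: "P v u = - P u v"
    and br_leib2: "P x (y*z) = P x y * z + y * P x z"
    and br_jac: "P x (P y z) + P y (P z x) + P z (P x y) = 0"
    and br_scale2: "P u (sc c v) = sc c (P u v)"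
  using assms unfolding poisson_bracket_def bilinear_wrt_def by blast+

lemma br_leib1:
  fixes P :: "'c::comm_ring \<Rightarrow> 'c \<Rightarrow> 'c"
  assumes "poisson_bracket sc P"
  shows "P (y*z) x = y * P z x + P y x * z"
proof -
  have "P (y*z) x = - P x (y*z)" by (rule br_anti[OF assms])
  also have "\<dots> = - (P x y * z + y * P x z)" by (simp add: br_leib2[OF assms])
  also have "\<dots> = y * P z x + P y x * z"
    by (simp add: br_anti[OF assms, of x y] br_anti[OF assms, of x z] algebra_simps)
  finally show ?thesis .
qed

lemma br_minus2:
  fixes P :: "'c::comm_ring \<Rightarrow> 'c \<Rightarrow> 'c"
  assumes "poisson_bracket sc P"
  shows "P u (-v) = - P u v"
proof -
  have "P u v + P u (-v) = 0" using br_add2[OF assms, of u v "-v"] br_add2[OF assms, of u 0 0] by simp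
  then show ?thesis by (simp add: add_eq_0_iff)
qed

lemma br_shift:
  fixes P :: "'c::comm_ring_1 fps \<Rightarrow> 'c fps \<Rightarrow> 'c fps"
  assumes "poisson_bracket (fps_scale sc) P" "module sc"
  shows "P u (fps_X^n * v) = fps_X^n * P u v"
proof -
  have "P u (fps_scale sc (fps_X^n) v) = fps_scale sc (fps_X^n) (P u v)" by (rule br_scale2[OF assms(1)])
  then show ?thesis by (simp only: fps_scale_Xpow[OF assms(2)])
qed

theorem lemma3p5:
  fixes sa :: "'k::field_char_0 \<Rightarrow> 'a::comm_ring_1 \<Rightarrow> 'a"
    and sb :: "'k \<Rightarrow> 'b::comm_ring_1 \<Rightarrow> 'b"
    and \<pi>0 :: "'a \<Rightarrow> 'a \<Rightarrow> 'a" and \<sigma>0 :: "'b \<Rightarrow> 'b \<Rightarrow> 'b"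
    and \<phi>0 :: "'a \<Rightarrow> 'b"
    and \<pi> :: "'a fps \<Rightarrow> 'a fps \<Rightarrow> 'a fps" and \<sigma> :: "'b fps \<Rightarrow> 'b fps \<Rightarrow> 'b fps"
    and X :: "nat \<Rightarrow> 'b \<Rightarrow> 'b" and k :: nat
    and R :: "'a \<Rightarrow> 'a \<Rightarrow> 'b"
  assumes alg_A: "kalgebra sa" and alg_B: "kalgebra sb"
    and pois_A: "poisson_bracket sa \<pi>0" and pois_B: "poisson_bracket sb \<sigma>0"
    and morph: "poisson_morphism sa sb \<pi>0 \<sigma>0 \<phi>0"
    and def_\<pi>: "formal_poisson_deformation sa \<pi>0 \<pi>"
    and def_\<sigma>: "formal_poisson_deformation sb \<sigma>0 \<sigma>"
    and X_der: "lambda_der_series sb X"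
    and R_bil: "bilinear_wrt sa sb R"
    and hyp: "\<forall>a1 a2. \<forall>n\<le>k + 1.
       fps_nth (inv (fps_exp_op sb X)
          (\<sigma> (fps_exp_op sb X (fps_const (\<phi>0 a1))) (fps_exp_op sb X (fps_const (\<phi>0 a2))))
        - fps_map_coeff \<phi>0 (\<pi> (fps_const a1) (fps_const a2))) n
       = (if n = k + 1 then R a1 a2 else 0)"
  shows "CE_der_2cochain sa sb \<phi>0 R \<and> (\<forall>a0 a1 a2. CE_delta2 \<pi>0 \<sigma>0 \<phi>0 R a0 a1 a2 = 0)"
proof -
  interpret DS sb X using alg_B X_der by unfold_locales
  have modA: "module sa" using alg_A by (simp add: kalgebra_def)
  have modB: "module sb" by (rule modb)
  have pb_pi: "poisson_bracket (fps_scale sa) \<pi>" and pi0: "\<And>f g. \<pi> f g $ 0 = \<pi>0 (f $ 0) (g $ 0)"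
    using def_\<pi> unfolding formal_poisson_deformation_def by blast+
  have pb_sig: "poisson_bracket (fps_scale sb) \<sigma>" and sig0: "\<And>f g. \<sigma> f g $ 0 = \<sigma>0 (f $ 0) (g $ 0)"
    using def_\<sigma> unfolding formal_poisson_deformation_def by blast+
  have ph_add: "\<And>x y. \<phi>0 (x+y) = \<phi>0 x + \<phi>0 y" and ph_mult: "\<And>x y. \<phi>0 (x*y) = \<phi>0 x * \<phi>0 y"
    using morph unfolding poisson_morphism_def by blast+
  have ph_zero: "\<phi>0 0 = 0" using ph_add[of 0 0] by simp
  have ph_minus: "\<phi>0 (-x) = - \<phi>0 x" for x
  proof -
    have "\<phi>0 x + \<phi>0 (-x) = 0" using ph_add[of x "-x"] ph_zero by simp
    then show ?thesis by (simp add: add_eq_0_iff)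
  qed
  have R_add2: "R x (y+y') = R x y + R x y'" for x y y'
    using R_bil unfolding bilinear_wrt_def by blast
  have R_minus2: "R x (-y) = - R x y" for x y
  proof -
    have "R x 0 = 0" using R_add2[of x 0 0] by simp
    then have "R x y + R x (-y) = 0" using R_add2[of x y "-y"] by simp
    then show ?thesis by (simp add: add_eq_0_iff)
  qed
  define K where "K = Suc k"
  have Kpos: "0 < K" by (simp add: K_def)
  define c where "c a = fps_const (\<phi>0 a)" for a
  define pp where "pp a b = fps_map_coeff \<phi>0 (\<pi> (fps_const a) (fps_const b))" for a b
  define S where "S u v = inv PHI (\<sigma> (PHI u) (PHI v))" for u v
  have hyp': "(S (c a) (c b) - pp a b) $ n = (if n = K then R a b else 0)" if "n \<le> K" for a b n
    using hyp that by (simp add: S_def c_def pp_def PHI_def K_def)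
  have H1: "S (c a) (c b) $ n = pp a b $ n" if "n < K" for a b n
    using hyp'[of n a b] that by simp
  have H2: "S (c a) (c b) $ K = pp a b $ K + R a b" for a b
    using hyp'[of K a b] by (simp add: algebra_simps)
  have S_anti: "S v u = - S u v" for u v
    by (simp add: S_def br_anti[OF pb_sig, of "PHI u" "PHI v"] PSI_minus)
  have S_add2: "S u (v + v') = S u v + S u v'" for u v v'
    by (simp add: S_def PHI_add br_add2[OF pb_sig] PSI_add)
  have S_shift: "S u (fps_X^n * v) = fps_X^n * S u v" for u v n
    by (simp add: S_def PHI_shift br_shift[OF pb_sig modB] PSI_shift)
  have S_leib1: "S (u1*u2) v = u1 * S u2 v + S u1 v * u2" for u1 u2 v
    by (simp add: S_def PHI_mult br_leib1[OF pb_sig] PSI_add PSI_mult)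
  have S_jac: "S u (S v w) + S v (S w u) + S w (S u v) = 0" for u v w
  proof -
    have "S u (S v w) + S v (S w u) + S w (S u v) =
      inv PHI (\<sigma> (PHI u) (\<sigma> (PHI v) (PHI w)) + \<sigma> (PHI v) (\<sigma> (PHI w) (PHI u)) + \<sigma> (PHI w) (\<sigma> (PHI u) (PHI v)))"
      by (simp add: S_def PSI_add)
    also have "\<dots> = 0" by (simp add: br_jac[OF pb_sig])
    finally show ?thesis .
  qed
  have S_0: "S u v $ 0 = \<sigma>0 (u $ 0) (v $ 0)" for u v
    by (simp add: S_def PSI_0 sig0 PHI_0)
  have map_minus: "fps_map_coeff \<phi>0 (-F) = - fps_map_coeff \<phi>0 F" for F
    by (rule fps_ext) (simp add: ph_minus)
  have pp_anti: "pp b a = - pp a b" for a b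
    by (simp add: pp_def br_anti[OF pb_pi, of "fps_const a" "fps_const b"] map_minus)
  have pp_leib: "pp (a*a') b = c a * pp a' b + pp a b * c a'" for a a' b
  proof -
    have "pp (a*a') b = fps_map_coeff \<phi>0 (fps_const a * \<pi> (fps_const a') (fps_const b) + \<pi> (fps_const a) (fps_const b) * fps_const a')"
      by (simp only: pp_def fps_const_mult[symmetric] br_leib1[OF pb_pi])
    also have "\<dots> = c a * pp a' b + pp a b * c a'"
      by (rule fps_ext) (simp add: pp_def c_def ph_add ph_mult)
    finally show ?thesis .
  qed
  have c_mult: "c (a*a') = c a * c a'" for a a'
    by (simp add: c_def ph_mult)
  have R_anti: "R b a = - R a b" for a b
  proof -
    have "R b a = S (c b) (c a) $ K - pp b a $ K" using H2[of b a] by simp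
    also have "\<dots> = - (S (c a) (c b) $ K - pp a b $ K)"
      by (simp add: S_anti[of "c b" "c a"] pp_anti[of b a])
    also have "\<dots> = - R a b" using H2[of a b] by simp
    finally show ?thesis .
  qed
  have R_leib1: "R (a*a') b = \<phi>0 a * R a' b + R a b * \<phi>0 a'" for a a' b
  proof -
    have "R (a*a') b = S (c (a*a')) (c b) $ K - pp (a*a') b $ K" using H2[of "a*a'" b] by simp
    also have "\<dots> = (\<phi>0 a * S (c a') (c b) $ K + S (c a) (c b) $ K * \<phi>0 a')
        - (\<phi>0 a * pp a' b $ K + pp a b $ K * \<phi>0 a')"
      by (simp add: c_mult S_leib1 pp_leib) (simp add: c_def)
    also have "\<dots> = \<phi>0 a * R a' b + R a b * \<phi>0 a'"
      by (simp add: H2 algebra_simps)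
    finally show ?thesis .
  qed
  have R_leib2: "R x (a*a') = \<phi>0 a * R x a' + R x a * \<phi>0 a'" for x a a'
    using R_leib1[of a a' x] R_anti[of x "a*a'"] R_anti[of x a] R_anti[of x a'] by (simp add: algebra_simps)
  have key: "S (c a) (S (c b) (c d)) $ K
      = \<phi>0 (\<pi> (fps_const a) (\<pi> (fps_const b) (fps_const d)) $ K) + R a (\<pi>0 b d) + \<sigma>0 (\<phi>0 a) (R b d)" for a b d
  proof -
    define g where "g = S (c b) (c d)"
    define pbd where "pbd = \<pi> (fps_const b) (fps_const d)"
    have E1: "S (c a) g $ K = (\<Sum>n\<le>K. S (c a) (fps_const (g $ n)) $ (K-n))"
      by (rule expansion[of "S (c a)" g K]) (simp_all add: S_add2 S_shift)
    have T: "S (c a) (fps_const (g $ n)) $ (K-n) = pp a (pbd $ n) $ (K-n)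
       + (if n = 0 then R a (pbd $ 0) else 0) + (if n = K then \<sigma>0 (\<phi>0 a) (R b d) else 0)"
      if n: "n \<le> K" for n
    proof (cases "n < K")
      case True
      then have gn: "fps_const (g $ n) = c (pbd $ n)"
        using H1[OF True, of b d] by (simp add: g_def c_def pp_def pbd_def)
      show ?thesis
      proof (cases "n = 0")
        case True then show ?thesis using gn Kpos by (simp add: H2)
      next
        case False
        then have "K - n < K" using n by simp
        then show ?thesis using gn False \<open>n < K\<close> by (simp add: H1)
      qed
    next
      case False
      then have nK: "n = K" using n by simp
      have "g $ n = \<phi>0 (pbd $ K) + R b d" using nK by (simp add: g_def H2 pp_def pbd_def)
      then have "fps_const (g $ n) = c (pbd $ K) + fps_const (R b d)"
        by (simp add: c_def fps_const_add)
      then have "S (c a) (fps_const (g $ n)) $ (K-n) = S (c a) (c (pbd $ K)) $ 0 + S (c a) (fps_const (R b d)) $ 0"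
        using nK by (simp add: S_add2)
      also have "\<dots> = pp a (pbd $ K) $ 0 + \<sigma>0 (\<phi>0 a) (R b d)"
        using H1[OF Kpos, of a "pbd $ K"] by (simp add: S_0 c_def)
      finally show ?thesis using nK Kpos by simp
    qed
    have "S (c a) g $ K = (\<Sum>n\<le>K. pp a (pbd $ n) $ (K-n)
       + (if n = 0 then R a (pbd $ 0) else 0) + (if n = K then \<sigma>0 (\<phi>0 a) (R b d) else 0))"
      unfolding E1 by (rule sum.cong) (simp_all add: T)
    also have "\<dots> = (\<Sum>n\<le>K. pp a (pbd $ n) $ (K-n)) + R a (pbd $ 0) + \<sigma>0 (\<phi>0 a) (R b d)"
      by (simp add: sum.distrib)
    also have "(\<Sum>n\<le>K. pp a (pbd $ n) $ (K-n)) = \<phi>0 (\<Sum>n\<le>K. \<pi> (fps_const a) (fps_const (pbd $ n)) $ (K-n))"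
    proof -
      have ph_sum: "\<phi>0 (sum f S') = (\<Sum>x\<in>S'. \<phi>0 (f x))" for f :: "nat \<Rightarrow> 'a" and S'
        by (induct S' rule: infinite_finite_induct) (simp_all add: ph_zero ph_add)
      show ?thesis by (simp add: ph_sum pp_def)
    qed
    also have "(\<Sum>n\<le>K. \<pi> (fps_const a) (fps_const (pbd $ n)) $ (K-n)) = \<pi> (fps_const a) pbd $ K"
      by (rule expansion[of "\<pi> (fps_const a)" pbd K, symmetric]) (simp_all add: br_add2[OF pb_pi] br_shift[OF pb_pi modA])
    also have "pbd $ 0 = \<pi>0 b d" by (simp add: pbd_def pi0)
    finally show ?thesis by (simp add: g_def pbd_def)
  qed
  have cyc: "R a0 (\<pi>0 a1 a2) + \<sigma>0 (\<phi>0 a0) (R a1 a2) + R a1 (\<pi>0 a2 a0) + \<sigma>0 (\<phi>0 a1) (R a2 a0)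
      + R a2 (\<pi>0 a0 a1) + \<sigma>0 (\<phi>0 a2) (R a0 a1) = 0" for a0 a1 a2
  proof -
    let ?A = "fps_const a0" and ?B = "fps_const a1" and ?C = "fps_const a2"
    have "0 = (S (c a0) (S (c a1) (c a2)) + S (c a1) (S (c a2) (c a0)) + S (c a2) (S (c a0) (c a1))) $ K"
      by (simp add: S_jac)
    also have "\<dots> = \<phi>0 ((\<pi> ?A (\<pi> ?B ?C) + \<pi> ?B (\<pi> ?C ?A) + \<pi> ?C (\<pi> ?A ?B)) $ K)
      + (R a0 (\<pi>0 a1 a2) + \<sigma>0 (\<phi>0 a0) (R a1 a2) + R a1 (\<pi>0 a2 a0) + \<sigma>0 (\<phi>0 a1) (R a2 a0)
      + R a2 (\<pi>0 a0 a1) + \<sigma>0 (\<phi>0 a2) (R a0 a1))"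
      by (simp only: fps_add_nth key ph_add) (simp add: algebra_simps)
    also have "(\<pi> ?A (\<pi> ?B ?C) + \<pi> ?B (\<pi> ?C ?A) + \<pi> ?C (\<pi> ?A ?B)) = 0"
      by (rule br_jac[OF pb_pi])
    finally show ?thesis by (simp add: ph_zero)
  qed
  have "CE_delta2 \<pi>0 \<sigma>0 \<phi>0 R a0 a1 a2 = 0" for a0 a1 a2
  proof -
    have e1: "\<sigma>0 (\<phi>0 a1) (R a0 a2) = - \<sigma>0 (\<phi>0 a1) (R a2 a0)"
      by (simp add: R_anti[of a2 a0] br_minus2[OF pois_B])
    have e2: "R (\<pi>0 a0 a2) a1 = R a1 (\<pi>0 a2 a0)"
      by (simp add: R_anti[of a1] br_anti[OF pois_A, of a2 a0] R_minus2)
    have e3: "R (\<pi>0 a0 a1) a2 = - R a2 (\<pi>0 a0 a1)" by (rule R_anti)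
    have e4: "R (\<pi>0 a1 a2) a0 = - R a0 (\<pi>0 a1 a2)" by (rule R_anti)
    show ?thesis unfolding CE_delta2_def e1 e2 e3 e4
      using cyc[of a0 a1 a2] by (simp add: algebra_simps)
  qed
  moreover have "CE_der_2cochain sa sb \<phi>0 R"
    unfolding CE_der_2cochain_def
    using R_bil R_anti R_leib1 R_leib2 by blast
  ultimately show ?thesis by blast
qed

end
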